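(* Let $\varpi$ be an oscillation function on $[0,R)$ that is concave and differentiable in a neighborhood of the origin, and assume: (a) $\int_0^R \varpi(r)\,\frac{dr}{r}<\infty$; (b) $\lim_{r\to0}\varpi(r)/r=+\infty$; (c) $\lim_{r\to0}\frac{\varpi(r)}{r\,\varpi'(r)}=C_1$ for some $C_1\in(1,+\infty]$. For $0<r<R$ set $$B(r)=\frac{r\int_r^{R}\frac{\varpi(s)}{s^2}\,ds}{\int_0^r\frac{\varpi(s)}{s}\,ds}.$$ Then $\lim_{r\to0}B(r)=\frac{1}{C_1-1}$ (interpreted as $0$ if $C_1=+\infty$). In particular there is a constant $C_2>0$ such that $B(r)\le C_2$ for all $r$ in some neighborhood of the origin.
   Context: An oscillation function is a real, continuous, non-decreasing function $\varpi$ defined on $[0,R)$ for some $R>0$, with $\varpi(0)=0$ and $\varpi(r)>0$ for $r>0$. "Differentiable" means pointwise differentiable at each $r>0$ in a neighborhood of the origin. *)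

theory Defs
  imports "HOL-Analysis.Analysis"
begin

definition oscillation_function :: "(real \<Rightarrow> real) \<Rightarrow> real \<Rightarrow> bool" where
  "oscillation_function w R \<longleftrightarrow> R > 0 \<and> continuous_on {0..<R} w \<and> mono_on {0..<R} w
     \<and> w 0 = 0 \<and> (\<forall>r\<in>{0<..<R}. w r > 0)"

definition Bquot :: "(real \<Rightarrow> real) \<Rightarrow> real \<Rightarrow> real \<Rightarrow> real" where
  "Bquot w R r = r * integral {r<..<R} (\<lambda>s. w s / s\<^sup>2) / integral {0<..<r} (\<lambda>s. w s / s)"

end

theory Submission
  imports Defs
begin

lemma deriv_int:
  fixes h :: "real \<Rightarrow> real"
  assumes "h integrable_on {a..b}" "a < x" "x < b" "isCont h x"
  shows "((\<lambda>u. integral {a..u} h) has_real_derivative h x) (at x)"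
proof -
  have "((\<lambda>u. integral {a..u} h) has_vector_derivative h x) (at x within ({a..b} - {}))"
    using assms by (intro integral_has_vector_derivative_continuous_at)
       (auto intro: continuous_at_imp_continuous_within)
  then show ?thesis using assms
    by (simp add: at_within_Icc_at has_real_derivative_iff_has_vector_derivative)
qed

theorem lemma3p1:
  fixes w :: "real \<Rightarrow> real" and R :: real and C1 :: ereal
  assumes osc: "oscillation_function w R"
    and nbhd: "\<exists>\<delta>>0. \<delta> \<le> R \<and> concave_on {0..<\<delta>} w \<and> (\<forall>r\<in>{0<..<\<delta>}. w differentiable (at r))"
    and a: "(\<lambda>r. w r / r) integrable_on {0<..<R}"
    and b: "filterlim (\<lambda>r. w r / r) at_top (at_right 0)"
    and C1: "C1 > 1"
    and c: "((\<lambda>r. ereal (w r / (r * deriv w r))) \<longlongrightarrow> C1) (at_right 0)"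
  shows "((\<lambda>r. Bquot w R r) \<longlongrightarrow> (if C1 = \<infinity> then 0 else 1 / (real_of_ereal C1 - 1))) (at_right 0)
         \<and> (\<exists>C2>0. \<forall>\<^sub>F r in at_right 0. Bquot w R r \<le> C2)"
proof -
  obtain d where d: "d > 0" "d \<le> R" and dif: "\<And>r. r \<in> {0<..<d} \<Longrightarrow> w differentiable (at r)"
    using nbhd by blast
  have R0: "R > 0" and wc: "continuous_on {0..<R} w" and w0: "w 0 = 0"
    and wpos: "\<And>r. r \<in> {0<..<R} \<Longrightarrow> w r > 0"
    using osc unfolding oscillation_function_def by auto
  define f where "f s = w s / s" for s :: real
  define g where "g s = w s / s\<^sup>2" for s :: real
  define F where "F r = integral {0..r} f" for r
  define G where "G r = integral {r..R} g" for r
  have wcont: "isCont w r" if "r \<in> {0<..<R}" for r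
  proof -
    have "continuous_on {0<..<R} w" using wc by (rule continuous_on_subset) auto
    then show ?thesis using that by (simp add: continuous_on_eq_continuous_at)
  qed
  have fcont: "isCont f r" if "r \<in> {0<..<R}" for r
    using wcont[OF that] that unfolding f_def by (intro continuous_intros) auto
  have gcont: "isCont g r" if "r \<in> {0<..<R}" for r
    using wcont[OF that] that unfolding g_def by (intro continuous_intros) auto
  have fint: "f integrable_on {0..R}"
    using a unfolding f_def by (simp add: integrable_on_open_interval_real)
  have gint: "g integrable_on {r..R}" if "r > 0" for r
  proof -
    have "g integrable_on {r<..<R}"
    proof (rule measurable_bounded_by_integrable_imp_integrable)
      show "g \<in> borel_measurable (lebesgue_on {r<..<R})"
        using gcont that
        by (intro continuous_imp_measurable_on_sets_lebesgue continuous_at_imp_continuous_on) auto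
      show "(\<lambda>s. f s / r) integrable_on {r<..<R}"
        using fint that by (intro integrable_on_divide)
          (auto simp: integrable_on_open_interval_real intro: integrable_subinterval_real)
      show "norm (g x) \<le> f x / r" if "x \<in> {r<..<R}" for x
      proof -
        have "w x > 0" using wpos that \<open>r > 0\<close> by auto
        then show ?thesis using that \<open>r > 0\<close> unfolding f_def g_def
          by (simp add: power2_eq_square divide_simps mult_left_mono)
      qed
    qed auto
    then show ?thesis by (simp add: integrable_on_open_interval_real)
  qed

  have fintd: "f integrable_on {0..d}" by (rule integrable_subinterval_real[OF fint]) (use d in auto)
  have Fder: "DERIV F r :> f r" if "r \<in> {0<..<d}" for r
    unfolding F_def using that d by (intro deriv_int[OF fintd] fcont) auto
  have Gder: "DERIV G r :> - g r" if r: "r \<in> {0<..<d}" for r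
  proof -
    define c where "c = r / 2"
    have c: "0 < c" "c < r" using r unfolding c_def by auto
    have gc: "g integrable_on {c..R}" using gint c by auto
    have "DERIV (\<lambda>u. integral {c..R} g - integral {c..u} g) r :> 0 - g r"
      using r d c gc by (intro derivative_intros deriv_int gcont)
        (auto intro: integrable_subinterval_real)
    then have D: "DERIV (\<lambda>u. integral {c..R} g - integral {c..u} g) r :> - g r" by simp
    show ?thesis
    proof (rule has_field_derivative_transform_within_open[OF D, where S="{c<..<R}"])
      show "r \<in> {c<..<R}" using c r d by auto
      show "integral {c..R} g - integral {c..u} g = G u" if "u \<in> {c<..<R}" for u
        using Henstock_Kurzweil_Integration.integral_combine[where a=c and c=u and b=R and f=g] that gc unfolding G_def by auto
    qed auto
  qed
  have wder: "DERIV w r :> deriv w r" if "r \<in> {0<..<d}" for r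
    using dif[OF that] by (simp add: DERIV_deriv_iff_real_differentiable)
  have evd: "\<forall>\<^sub>F r in at_right 0. r \<in> {0<..<d}"
    using d by (intro eventually_at_right_real)
  have Flim: "(F \<longlongrightarrow> 0) (at_right 0)"
  proof -
    have "continuous_on {0..R} F" unfolding F_def using fint by (rule indefinite_integral_continuous_1)
    then have "(F \<longlongrightarrow> F 0) (at 0 within {0..R})"
      using R0 by (simp add: continuous_on_eq_continuous_within continuous_within)
    then show ?thesis using R0 by (simp add: at_within_Icc_at_right F_def)
  qed
  have wlim: "(w \<longlongrightarrow> 0) (at_right 0)"
  proof -
    have "continuous_on {0..d/2} w" using wc by (rule continuous_on_subset) (use d in auto)
    then have "(w \<longlongrightarrow> w 0) (at 0 within {0..d/2})"
      using d by (simp add: continuous_on_eq_continuous_within continuous_within)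
    then show ?thesis using d w0 by (simp add: at_within_Icc_at_right)
  qed
  have Fr: "filterlim (\<lambda>r. F r / r) at_top (at_right 0)"
  proof (rule lhopital_right_0[where f'=f and g'="\<lambda>_. 1"])
    show "((\<lambda>x. x) \<longlongrightarrow> 0) (at_right (0::real))" by (intro tendsto_ident_at)
    show "\<forall>\<^sub>F x in at_right 0. (x::real) \<noteq> 0" using evd by eventually_elim auto
    show "\<forall>\<^sub>F x in at_right 0. DERIV F x :> f x" using evd by eventually_elim (rule Fder)
    show "\<forall>\<^sub>F x in at_right 0. DERIV (\<lambda>x. x) x :> 1" by (auto intro!: derivative_eq_intros)
    show "filterlim (\<lambda>x. f x / 1) at_top (at_right 0)" using b by (simp add: f_def)
  qed (use Flim in auto)
  have Fpos: "\<forall>\<^sub>F r in at_right 0. F r > 0"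
    using filterlim_at_top_dense[THEN iffD1, OF Fr, rule_format, of 1] evd
    by eventually_elim (auto simp: field_simps)
  define c0 where "c0 = (if C1 = \<infinity> then 0 else 1 / real_of_ereal C1)"
  have c0: "0 \<le> c0" "c0 < 1"
  proof -
    have "0 \<le> c0 \<and> c0 < 1"
    proof (cases C1)
      case (real x) then show ?thesis using C1 by (auto simp: c0_def)
    qed (use C1 in \<open>auto simp: c0_def\<close>)
    then show "0 \<le> c0" "c0 < 1" by auto
  qed
  have qlim: "((\<lambda>r. r * deriv w r / w r) \<longlongrightarrow> c0) (at_right 0)"
  proof (cases C1)
    case (real x)
    then have "((\<lambda>r. w r / (r * deriv w r)) \<longlongrightarrow> x) (at_right 0)" using c by (simp add: lim_ereal)
    then have "((\<lambda>r. inverse (w r / (r * deriv w r))) \<longlongrightarrow> inverse x) (at_right 0)"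
      using real C1 by (intro tendsto_inverse) auto
    then show ?thesis using real by (simp add: c0_def inverse_eq_divide)
  next
    case PInf
    then have "filterlim (\<lambda>r. w r / (r * deriv w r)) at_top (at_right 0)"
      using c by (simp add: tendsto_PInfty_eq_at_top)
    then have "((\<lambda>r. inverse (w r / (r * deriv w r))) \<longlongrightarrow> 0) (at_right 0)"
      by (rule tendsto_inverse_0_at_top)
    then show ?thesis using PInf by (simp add: c0_def)
  next
    case MInf then show ?thesis using C1 by auto
  qed
  have wF: "((\<lambda>r. w r / F r) \<longlongrightarrow> c0) (at_right 0)"
  proof (rule lhopital_right_0[where f'="deriv w" and g'=f])
    show "\<forall>\<^sub>F x in at_right 0. F x \<noteq> 0" using Fpos by eventually_elim auto
    show "\<forall>\<^sub>F x in at_right 0. f x \<noteq> 0" using evd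
      by eventually_elim (use wpos d in \<open>fastforce simp: f_def\<close>)
    show "\<forall>\<^sub>F x in at_right 0. DERIV w x :> deriv w x" using evd by eventually_elim (rule wder)
    show "\<forall>\<^sub>F x in at_right 0. DERIV F x :> f x" using evd by eventually_elim (rule Fder)
    show "((\<lambda>x. deriv w x / f x) \<longlongrightarrow> c0) (at_right 0)"
    proof (rule Lim_transform_eventually[OF qlim])
      show "\<forall>\<^sub>F x in at_right 0. x * deriv w x / w x = deriv w x / f x"
        using evd by eventually_elim (use wpos d in \<open>fastforce simp: f_def\<close>)
    qed
  qed (use wlim Flim in auto)
  have wltF: "\<forall>\<^sub>F r in at_right 0. w r < F r"
    using order_tendstoD(2)[OF wF c0(2)] Fpos by eventually_elim (auto simp: field_simps)
  define L where "L = c0 / (1 - c0)"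
  have Blim: "((\<lambda>r. G r / (F r / r)) \<longlongrightarrow> L) (at_right 0)"
  proof (rule lhopital_right_0_at_top[where f'="\<lambda>r. - g r" and g'="\<lambda>r. (f r * r - F r * 1) / (r * r)"])
    show "filterlim (\<lambda>r. F r / r) at_top (at_right 0)" by (rule Fr)
    show "\<forall>\<^sub>F x in at_right 0. (f x * x - F x * 1) / (x * x) \<noteq> 0"
      using evd wltF by eventually_elim (auto simp: f_def)
    show "\<forall>\<^sub>F x in at_right 0. DERIV G x :> - g x" using evd by eventually_elim (rule Gder)
    show "\<forall>\<^sub>F x in at_right 0. DERIV (\<lambda>r. F r / r) x :> (f x * x - F x * 1) / (x * x)"
      using evd by eventually_elim (rule DERIV_divide[OF Fder DERIV_ident], auto)
    have "((\<lambda>r. (w r / F r) / (1 - w r / F r)) \<longlongrightarrow> L) (at_right 0)"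
      unfolding L_def using c0 by (intro tendsto_intros wF) auto
    then show "((\<lambda>x. - g x / ((f x * x - F x * 1) / (x * x))) \<longlongrightarrow> L) (at_right 0)"
    proof (rule Lim_transform_eventually)
      show "\<forall>\<^sub>F x in at_right 0. w x / F x / (1 - w x / F x) = - g x / ((f x * x - F x * 1) / (x * x))"
        using evd wltF Fpos by eventually_elim (auto simp: f_def g_def field_simps power2_eq_square)
    qed
  qed
  have Beq: "\<forall>\<^sub>F r in at_right 0. G r / (F r / r) = Bquot w R r"
    using evd by eventually_elim
      (auto simp: Bquot_def G_def F_def f_def[abs_def] g_def[abs_def] integral_open_interval_real)
  have LL: "L = (if C1 = \<infinity> then 0 else 1 / (real_of_ereal C1 - 1))"
  proof (cases C1)
    case (real x) then show ?thesis using C1 by (auto simp: L_def c0_def field_simps)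
  qed (use C1 in \<open>auto simp: L_def c0_def\<close>)
  have T: "((\<lambda>r. Bquot w R r) \<longlongrightarrow> L) (at_right 0)"
    using Lim_transform_eventually[OF Blim Beq] .
  have "L \<ge> 0" using c0 by (simp add: L_def)
  then have "\<exists>C2>0. \<forall>\<^sub>F r in at_right 0. Bquot w R r \<le> C2"
    using order_tendstoD(2)[OF T, of "L + 1"]
    by (intro exI[of _ "L + 1"]) (auto elim: eventually_mono)
  then show ?thesis using T LL by simp
qed
end
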